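(* For every level $t \in \mathcal{L}$ there exist $u_1, \ldots, u_n \in \mathcal{L}_s$ (with $n \ge 0$) such that $t =_{\mathcal{L}} \max(u_1, \ldots, u_n)$.
   Context: $\operatorname{imax}\colon \mathbb{N}\times\mathbb{N}\to\mathbb{N}$ is defined by $\operatorname{imax}(i,0)=0$ and $\operatorname{imax}(i,j+1)=\max(i,j+1)$. Levels are terms of the grammar $t ::= x \mid 0 \mid s(t) \mid \max(t,t) \mid \operatorname{imax}(t,t)$, with $x$ in a countable set of variables $\mathcal{X}$; $\mathcal{L}$ is the set of levels. A valuation is $\sigma\colon\mathcal{X}\to\mathbb{N}$; values are $[0]_\sigma=0$, $[x]_\sigma=\sigma(x)$, $[s(t)]_\sigma=[t]_\sigma+1$, $[\max(t_1,t_2)]_\sigma=\max([t_1]_\sigma,[t_2]_\sigma)$, $[\operatorname{imax}(t_1,t_2)]_\sigma=\operatorname{imax}([t_1]_\sigma,[t_2]_\sigma)$. Sublevels: for finite $E\subseteq\mathcal{X}$, $x\in\mathcal{X}$, $S\in\mathbb{N}$, $[A(E,x,S)]_\sigma$ is $0$ if some $y\in E$ has $\sigma(y)=0$ and $\sigma(x)+S$ otherwise; $[B(E,S)]_\sigma$ is $0$ if some $y\in E$ has $\sigma(y)=0$ and $S$ otherwise. $\mathcal{L}_s$ is the set of sublevels $A(E,x,S)$ with $x \in E$ and $B(E,S)$ with $S > 0$. $\max$ of a finite list is evaluated pointwise, with $\max()$ (empty) having value $0$. $t_1 =_{\mathcal{L}} t_2$ means $[t_1]_\sigma=[t_2]_\sigma$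 for all valuations $\sigma$. *)

theory Defs
  imports Main
begin

type_synonym var = nat

definition imax :: "nat \<Rightarrow> nat \<Rightarrow> nat" where
  "imax i j = (if j = 0 then 0 else max i j)"

datatype level = LVar var | LZero | LSucc level | LMax level level | LIMax level level

fun lval :: "(var \<Rightarrow> nat) \<Rightarrow> level \<Rightarrow> nat" where
  "lval \<sigma> (LVar x) = \<sigma> x"
| "lval \<sigma> LZero = 0"
| "lval \<sigma> (LSucc t) = lval \<sigma> t + 1"
| "lval \<sigma> (LMax t1 t2) = max (lval \<sigma> t1) (lval \<sigma> t2)"
| "lval \<sigma> (LIMax t1 t2) = imax (lval \<sigma> t1) (lval \<sigma> t2)"

datatype sublevel = SA "var set" var nat | SB "var set" nat

fun sval :: "(var \<Rightarrow> nat) \<Rightarrow> sublevel \<Rightarrow> nat" where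
  "sval \<sigma> (SA E x S) = (if \<exists>y\<in>E. \<sigma> y = 0 then 0 else \<sigma> x + S)"
| "sval \<sigma> (SB E S) = (if \<exists>y\<in>E. \<sigma> y = 0 then 0 else S)"

text \<open>Membership in L_s: E finite, and x \<in> E for A, S > 0 for B.\<close>
fun wf_sublevel :: "sublevel \<Rightarrow> bool" where
  "wf_sublevel (SA E x S) = (finite E \<and> x \<in> E)"
| "wf_sublevel (SB E S) = (finite E \<and> S > 0)"

definition smax_val :: "(var \<Rightarrow> nat) \<Rightarrow> sublevel list \<Rightarrow> nat" where
  "smax_val \<sigma> us = foldr (\<lambda>u m. max (sval \<sigma> u) m) us 0"

end

theory Submission
  imports Defs
begin

fun guard :: "sublevel \<Rightarrow> var set" where
  "guard (SA E x S) = E" | "guard (SB E S) = E"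

fun addg :: "var set \<Rightarrow> sublevel \<Rightarrow> sublevel" where
  "addg F (SA E x S) = SA (E \<union> F) x S" | "addg F (SB E S) = SB (E \<union> F) S"

fun shift :: "sublevel \<Rightarrow> sublevel" where
  "shift (SA E x S) = SA E x (S+1)" | "shift (SB E S) = SB E (S+1)"

lemma smax_Nil[simp]: "smax_val \<sigma> [] = 0" by (simp add: smax_val_def)
lemma smax_Cons[simp]: "smax_val \<sigma> (u # us) = max (sval \<sigma> u) (smax_val \<sigma> us)"
  by (simp add: smax_val_def)
lemma smax_append[simp]: "smax_val \<sigma> (xs @ ys) = max (smax_val \<sigma> xs) (smax_val \<sigma> ys)"
  by (induction xs) auto

lemma sval_addg: "sval \<sigma> (addg F u) = (if \<exists>y\<in>F. \<sigma> y = 0 then 0 else sval \<sigma> u)"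
  by (cases u) (auto simp: Bex_def; fastforce)+

lemma smax_addg: "smax_val \<sigma> (map (addg F) us) = (if \<exists>y\<in>F. \<sigma> y = 0 then 0 else smax_val \<sigma> us)"
  by (induction us) (auto simp: sval_addg)

lemma sval_zero: "wf_sublevel v \<Longrightarrow> (sval \<sigma> v = 0) = (\<exists>y\<in>guard v. \<sigma> y = 0)"
  by (cases v) auto

lemma smax_shift: "max 1 (smax_val \<sigma> (map shift us)) = smax_val \<sigma> us + 1"
proof (induction us)
  case Nil then show ?case by simp
next
  case (Cons u us)
  have "sval \<sigma> (shift u) = (if \<exists>y\<in>guard u. \<sigma> y = 0 then 0 else sval \<sigma> u + 1)"
       "(\<exists>y\<in>guard u. \<sigma> y = 0) \<longrightarrow> sval \<sigma> u = 0"
    by (cases u; auto)+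
  with Cons show ?case by (cases "\<exists>y\<in>guard u. \<sigma> y = 0") (simp_all add: max_def split: if_splits)
qed

lemma imax_main:
  assumes "\<forall>v\<in>set vs. wf_sublevel v"
  shows "smax_val \<sigma> (concat (map (\<lambda>v. v # map (addg (guard v)) us) vs))
         = imax (smax_val \<sigma> us) (smax_val \<sigma> vs)"
  using assms
proof (induction vs)
  case Nil then show ?case by (simp add: imax_def)
next
  case (Cons v vs)
  have z: "(sval \<sigma> v = 0) = (\<exists>y\<in>guard v. \<sigma> y = 0)" using Cons.prems sval_zero by auto
  show ?case using Cons z by (auto simp: smax_addg imax_def max_def)
qed

theorem theorem26:
  fixes t :: level
  shows "\<exists>us :: sublevel list. (\<forall>u\<in>set us. wf_sublevel u) \<and>
           (\<forall>\<sigma>. lval \<sigma> t = smax_val \<sigma> us)"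
proof (induction t)
  case (LVar x)
  show ?case by (rule exI[of _ "[SA {x} x 0]"]) auto
next
  case LZero
  show ?case by (rule exI[of _ "[]"]) auto
next
  case (LSucc t)
  then obtain us where us: "\<forall>u\<in>set us. wf_sublevel u" "\<forall>\<sigma>. lval \<sigma> t = smax_val \<sigma> us" by blast
  have "\<forall>u\<in>set us. wf_sublevel (shift u)"
  proof
    fix u assume "u \<in> set us" then have "wf_sublevel u" using us(1) by auto
    then show "wf_sublevel (shift u)" by (cases u) auto
  qed
  then show ?case using us(2) smax_shift
    by (intro exI[of _ "SB {} 1 # map shift us"]) auto
next
  case (LMax t1 t2)
  then obtain us vs where "\<forall>u\<in>set us. wf_sublevel u" "\<forall>\<sigma>. lval \<sigma> t1 = smax_val \<sigma> us"
    "\<forall>u\<in>set vs. wf_sublevel u" "\<forall>\<sigma>. lval \<sigma> t2 = smax_val \<sigma> vs" by blast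
  then show ?case by (intro exI[of _ "us @ vs"]) auto
next
  case (LIMax t1 t2)
  then obtain us vs where us: "\<forall>u\<in>set us. wf_sublevel u" "\<forall>\<sigma>. lval \<sigma> t1 = smax_val \<sigma> us"
    and vs: "\<forall>u\<in>set vs. wf_sublevel u" "\<forall>\<sigma>. lval \<sigma> t2 = smax_val \<sigma> vs" by blast
  have wf: "\<forall>u\<in>set (concat (map (\<lambda>v. v # map (addg (guard v)) us) vs)). wf_sublevel u"
  proof
    fix u assume "u \<in> set (concat (map (\<lambda>v. v # map (addg (guard v)) us) vs))"
    then obtain v where v: "v \<in> set vs" and d: "u = v \<or> u \<in> addg (guard v) ` set us" by auto
    from d show "wf_sublevel u"
    proof
      assume "u = v" then show ?thesis using v vs(1) by auto
    next
      assume "u \<in> addg (guard v) ` set us"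
      then obtain w where w: "w \<in> set us" "u = addg (guard v) w" by auto
      have fv: "finite (guard v)" using vs(1) v by (cases v) auto
      have "wf_sublevel w" using w(1) us(1) by auto
      then show ?thesis using w(2) fv by (cases w) auto
    qed
  qed
  show ?case
    by (rule exI[of _ "concat (map (\<lambda>v. v # map (addg (guard v)) us) vs)"])
       (simp add: wf imax_main vs us del: set_concat)
qed

end
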